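(* Let $A=\begin{pmatrix}1&2\\0&1\end{pmatrix}$, $B=\begin{pmatrix}1&0\\2&1\end{pmatrix}$, and let $\langle A,B\rangle\le\mathrm{SL}_2(\mathbb{Z})$ be the subgroup they generate. There exists an absolute constant $C>0$ such that for every $R\ge1$ there is a free subgroup $F_R\le\langle A,B\rangle$ and a finite set $W=W_R=W^+\cup(W^+)^{-1}$, where $W^+$ is a free basis of $F_R$, satisfying: (1) $W=\sigma(W)=\tau(W)$; (2) $\max_{w\in W}\|w\|_\infty\le 18R^2$; (3) $|W|\ge CR^2$; (4) for every prime $p>36R^2$, the elements of $W$ are pairwise distinct modulo $p$.
   Context: $\|X\|_\infty$ denotes the maximum of the absolute values of the entries of the matrix $X$. For $g\in\mathrm{SL}_2(\mathbb{R})$, $\sigma(g)=(g^{-1})^T$ and $\tau(g)=JgJ$ with $J=\begin{pmatrix}0&1\\1&0\end{pmatrix}$; for a set $W$, $\sigma(W)=\{\sigma(w):w\in W\}$ and similarly for $\tau$. *)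

theory Defs
  imports "HOL-Analysis.Analysis" "HOL-Algebra.Generated_Groups"
begin

type_synonym mat2 = "int^2^2"

definition SL2Z :: "mat2 monoid" where
  "SL2Z = \<lparr>carrier = {M. det M = 1}, mult = (**), one = mat 1\<rparr>"

definition mA :: mat2 where
  "mA = vector [vector [1, 2], vector [0, 1]]"

definition mB :: mat2 where
  "mB = vector [vector [1, 0], vector [2, 1]]"

definition mJ :: mat2 where
  "mJ = vector [vector [0, 1], vector [1, 0]]"

definition sigma :: "mat2 \<Rightarrow> mat2" where
  "sigma g = transpose (inv\<^bsub>SL2Z\<^esub> g)"

definition tau :: "mat2 \<Rightarrow> mat2" where
  "tau g = mJ ** g ** mJ"

definition supnorm :: "mat2 \<Rightarrow> int" where
  "supnorm M = Max {\<bar>M $ i $ j\<bar> | i j. True}"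

text \<open>Words over S \<union> S^{-1}: letter (True,x) means x, (False,x) means x^{-1}.\<close>
definition word_eval :: "(bool \<times> mat2) list \<Rightarrow> mat2" where
  "word_eval ws = foldr (\<lambda>(b,x) acc. (if b then x else inv\<^bsub>SL2Z\<^esub> x) \<otimes>\<^bsub>SL2Z\<^esub> acc) ws \<one>\<^bsub>SL2Z\<^esub>"

definition reduced_word :: "(bool \<times> mat2) list \<Rightarrow> bool" where
  "reduced_word ws \<longleftrightarrow>
     (\<forall>i. Suc i < length ws \<longrightarrow> \<not> (snd (ws ! i) = snd (ws ! Suc i) \<and> fst (ws ! i) \<noteq> fst (ws ! Suc i)))"

definition free_basis :: "mat2 set \<Rightarrow> bool" where
  "free_basis S \<longleftrightarrow> S \<subseteq> carrier SL2Z \<and>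
     (\<forall>ws. ws \<noteq> [] \<and> snd ` set ws \<subseteq> S \<and> reduced_word ws \<longrightarrow> word_eval ws \<noteq> \<one>\<^bsub>SL2Z\<^esub>)"

end

theory Submission
  imports Defs
begin


definition mk :: "int \<Rightarrow> int \<Rightarrow> int \<Rightarrow> int \<Rightarrow> mat2" where
  "mk a b c d = vector [vector [a, b], vector [c, d]]"

lemma mk_nth[simp]: "mk a b c d $ 1 $ 1 = a" "mk a b c d $ 1 $ 2 = b"
  "mk a b c d $ 2 $ 1 = c" "mk a b c d $ 2 $ 2 = d"
  by (simp_all add: mk_def)

lemma mat2_eq_iff: "(M::mat2) = N \<longleftrightarrow> M$1$1 = N$1$1 \<and> M$1$2 = N$1$2 \<and> M$2$1 = N$2$1 \<and> M$2$2 = N$2$2"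
  by (auto simp: vec_eq_iff forall_2)

lemma mk_eq_iff[simp]: "mk a b c d = mk a' b' c' d' \<longleftrightarrow> a = a' \<and> b = b' \<and> c = c' \<and> d = d'"
  by (simp add: mat2_eq_iff)

lemma mk_mult[simp]: "mk a b c d ** mk e f g h = mk (a*e+b*g) (a*f+b*h) (c*e+d*g) (c*f+d*h)"
  by (simp add: mat2_eq_iff matrix_matrix_mult_def sum_2)

lemma det_mk[simp]: "det (mk a b c d) = a*d - b*c"
  by (simp add: det_2)

lemma mat1_mk: "(mat 1 :: mat2) = mk 1 0 0 1"
  by (simp add: mat2_eq_iff mat_def)

lemma mat2_mk: "(M::mat2) = mk (M$1$1) (M$1$2) (M$2$1) (M$2$2)"
  by (simp add: mat2_eq_iff)

lemma transpose_mk[simp]: "transpose (mk a b c d) = mk a c b d"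
  by (simp add: mat2_eq_iff transpose_def)

definition vc :: "int \<Rightarrow> int \<Rightarrow> int^2" where "vc x y = vector [x,y]"

lemma vc_nth[simp]: "vc x y $ 1 = x" "vc x y $ 2 = y" by (simp_all add: vc_def)

lemma mk_mulv[simp]: "mk a b c d *v vc x y = vc (a*x+b*y) (c*x+d*y)"
  by (simp add: vec_eq_iff forall_2 matrix_vector_mult_def sum_2)

lemma vc_eq_iff[simp]: "vc x y = vc x' y' \<longleftrightarrow> x = x' \<and> y = y'"
  by (simp add: vec_eq_iff forall_2)

lemma mA_mk: "mA = mk 1 2 0 1" by (simp add: mA_def mk_def)
lemma mB_mk: "mB = mk 1 0 2 1" by (simp add: mB_def mk_def)
lemma mJ_mk: "mJ = mk 0 1 1 0" by (simp add: mJ_def mk_def)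

lemma SL2Z_simps[simp]: "carrier SL2Z = {M. det M = 1}" "mult SL2Z = (**)" "one SL2Z = mat 1"
  by (simp_all add: SL2Z_def)

lemma group_SL2Z: "group SL2Z"
proof (rule groupI)
  show "\<And>x y. x \<in> carrier SL2Z \<Longrightarrow> y \<in> carrier SL2Z \<Longrightarrow> x \<otimes>\<^bsub>SL2Z\<^esub> y \<in> carrier SL2Z"
    by (simp add: det_mul)
  show "\<one>\<^bsub>SL2Z\<^esub> \<in> carrier SL2Z" by simp
  show "\<And>x y z. x \<in> carrier SL2Z \<Longrightarrow> y \<in> carrier SL2Z \<Longrightarrow> z \<in> carrier SL2Z \<Longrightarrow>
     x \<otimes>\<^bsub>SL2Z\<^esub> y \<otimes>\<^bsub>SL2Z\<^esub> z = x \<otimes>\<^bsub>SL2Z\<^esub> (y \<otimes>\<^bsub>SL2Z\<^esub> z)"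
    by (simp add: matrix_mul_assoc)
  show "\<And>x. x \<in> carrier SL2Z \<Longrightarrow> \<one>\<^bsub>SL2Z\<^esub> \<otimes>\<^bsub>SL2Z\<^esub> x = x"
    by simp
  show "\<And>x. x \<in> carrier SL2Z \<Longrightarrow> \<exists>y\<in>carrier SL2Z. y \<otimes>\<^bsub>SL2Z\<^esub> x = \<one>\<^bsub>SL2Z\<^esub>"
  proof -
    fix x :: mat2 assume "x \<in> carrier SL2Z"
    obtain a b c d where x: "x = mk a b c d" by (rule that[OF mat2_mk])
    with \<open>x \<in> carrier SL2Z\<close> have d: "a*d - b*c = 1" by simp
    show "\<exists>y\<in>carrier SL2Z. y \<otimes>\<^bsub>SL2Z\<^esub> x = \<one>\<^bsub>SL2Z\<^esub>"
      apply (rule bexI[of _ "mk d (-b) (-c) a"])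
      using d by (simp_all add: x mat1_mk algebra_simps)
  qed
qed

interpretation SL: group SL2Z by (rule group_SL2Z)

lemma inv_mk: "a*d - b*c = 1 \<Longrightarrow> inv\<^bsub>SL2Z\<^esub> (mk a b c d) = mk d (-b) (-c) a"
  apply (rule SL.inv_equality)
  by (simp_all add: mat1_mk algebra_simps)


abbreviation gen where "gen \<equiv> generate SL2Z {mA, mB}"

lemma gen_mult: "x \<in> gen \<Longrightarrow> y \<in> gen \<Longrightarrow> x ** y \<in> gen"
  using generate.eng[of x SL2Z "{mA,mB}" y] by simp

lemma Apow_gen: "mk 1 (2*k) 0 1 \<in> gen"
proof (induction k rule: int_induct[where k=0])
  case base
  show ?case using generate.one[of SL2Z "{mA,mB}"] by (simp add: mat1_mk)
next
  case (step1 i)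
  have "mk 1 (2*(i+1)) 0 1 = mk 1 (2*i) 0 1 ** mA" by (simp add: mA_mk algebra_simps)
  thus ?case using gen_mult[OF step1(2), of mA] generate.incl[of mA "{mA,mB}" SL2Z] by simp
next
  case (step2 i)
  have "inv\<^bsub>SL2Z\<^esub> mA = mk 1 (-2) 0 1" by (simp add: mA_mk inv_mk)
  moreover have "inv\<^bsub>SL2Z\<^esub> mA \<in> gen" by (rule generate.inv) simp
  moreover have "mk 1 (2*(i-1)) 0 1 = mk 1 (2*i) 0 1 ** mk 1 (-2) 0 1" by (simp add: algebra_simps)
  ultimately show ?case using gen_mult[OF step2(2)] by metis
qed

lemma Bpow_gen: "mk 1 0 (2*k) 1 \<in> gen"
proof (induction k rule: int_induct[where k=0])
  case base
  show ?case using generate.one[of SL2Z "{mA,mB}"] by (simp add: mat1_mk)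
next
  case (step1 i)
  have "mk 1 0 (2*(i+1)) 1 = mk 1 0 (2*i) 1 ** mB" by (simp add: mB_mk algebra_simps)
  thus ?case using gen_mult[OF step1(2), of mB] generate.incl[of mB "{mA,mB}" SL2Z] by simp
next
  case (step2 i)
  have "inv\<^bsub>SL2Z\<^esub> mB = mk 1 0 (-2) 1" by (simp add: mB_mk inv_mk)
  moreover have "inv\<^bsub>SL2Z\<^esub> mB \<in> gen" by (rule generate.inv) simp
  moreover have "mk 1 0 (2*(i-1)) 1 = mk 1 0 (2*i) 1 ** mk 1 0 (-2) 1" by (simp add: algebra_simps)
  ultimately show ?case using gen_mult[OF step2(2)] by metis
qed

lemma reduce_step:
  fixes x y :: int
  assumes "y \<noteq> 0" "even x \<longleftrightarrow> odd y"
  shows "\<exists>n. \<bar>x + 2*n*y\<bar> < \<bar>y\<bar>"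
proof -
  define r where "r = x mod (2*y)"
  define q where "q = x div (2*y)"
  have xr: "x = 2*y*q + r" unfolding r_def q_def by simp
  have par: "even r \<longleftrightarrow> odd y" using assms(2) xr by simp
  have ne: "\<bar>r\<bar> \<noteq> \<bar>y\<bar>" using par by (metis even_abs_add_iff odd_add)
  show ?thesis
  proof (cases "y > 0")
    case True
    have "0 \<le> r" "r < 2*y" unfolding r_def using True by simp_all
    show ?thesis
    proof (cases "r < y")
      case True
      then show ?thesis using \<open>0 \<le> r\<close> \<open>y>0\<close> by (intro exI[of _ "-q"]) (simp add: xr algebra_simps)
    next
      case False
      then show ?thesis using ne \<open>r < 2*y\<close> \<open>y>0\<close> by (intro exI[of _ "-q-1"]) (simp add: xr algebra_simps)
    qed
  next
    case False
    hence "y < 0" using assms(1) by simp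
    have "r \<le> 0" "2*y < r" unfolding r_def using \<open>y<0\<close> by simp_all
    show ?thesis
    proof (cases "y < r")
      case True
      then show ?thesis using \<open>r \<le> 0\<close> \<open>y<0\<close> by (intro exI[of _ "-q"]) (simp add: xr algebra_simps)
    next
      case False
      then show ?thesis using ne \<open>2*y < r\<close> \<open>y<0\<close> by (intro exI[of _ "-q-1"]) (simp add: xr algebra_simps)
    qed
  qed
qed

lemma descent:
  "\<forall>a b c d. nat (\<bar>a\<bar> + \<bar>b\<bar>) = m \<longrightarrow> a*d - b*c = 1 \<longrightarrow> a mod 4 = 1 \<longrightarrow> even b \<longrightarrow> even c
     \<longrightarrow> mk a b c d \<in> gen"
proof (induction m rule: less_induct)
  case (less m)
  show ?case
  proof (intro allI impI)
    fix a b c d :: int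
    have IH: "\<And>a b c d. nat (\<bar>a\<bar> + \<bar>b\<bar>) < m \<Longrightarrow> a*d - b*c = 1 \<Longrightarrow> a mod 4 = 1 \<Longrightarrow> even b \<Longrightarrow> even c
     \<Longrightarrow> mk a b c d \<in> gen" using less by blast
    assume m: "nat (\<bar>a\<bar> + \<bar>b\<bar>) = m" and det: "a*d - b*c = 1" and a4: "a mod 4 = 1"
      and eb: "even b" and ec: "even c"
    have oa: "odd a" using a4 by (metis dvd_mod_iff even_numeral odd_one)
    show "mk a b c d \<in> gen"
    proof (cases "b = 0")
      case True
      hence "a*d = 1" using det by simp
      hence "a = 1 \<or> a = -1" using zmult_eq_1_iff by blast
      hence a1: "a = 1" using a4 by auto
      hence "d = 1" using \<open>a*d = 1\<close> by simp
      obtain k where "c = 2*k" using ec by blast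
      thus ?thesis using Bpow_gen[of k] a1 \<open>d=1\<close> True by simp
    next
      case False
      show ?thesis
      proof (cases "\<bar>b\<bar> < \<bar>a\<bar>")
        case True
        obtain n where n: "\<bar>a + 2*n*b\<bar> < \<bar>b\<bar>" using reduce_step[OF False] oa eb by blast
        have "nat (\<bar>a + 2*n*b\<bar> + \<bar>b\<bar>) < m" using n True unfolding m[symmetric] by (subst nat_less_eq_zless) auto
        moreover have "(a + 2*n*b) mod 4 = 1"
        proof -
          obtain k where "b = 2*k" using eb by blast
          hence "a + 2*n*b = a + (n*k)*4" by simp
          thus ?thesis using a4 by (metis mod_mult_self1)
        qed
        ultimately have "mk (a + 2*n*b) b (c + 2*n*d) d \<in> gen"
          by (intro IH) (use det eb ec in \<open>auto simp: algebra_simps\<close>)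
        moreover have "mk a b c d = mk (a + 2*n*b) b (c + 2*n*d) d ** mk 1 0 (2*(-n)) 1"
          by (simp add: algebra_simps)
        ultimately show ?thesis using gen_mult Bpow_gen by metis
      next
        case False
        have a0: "a \<noteq> 0" using oa by auto
        have "\<bar>a\<bar> \<noteq> \<bar>b\<bar>" using oa eb by (metis even_abs_add_iff odd_add)
        hence lt: "\<bar>a\<bar> < \<bar>b\<bar>" using False by simp
        obtain n where n: "\<bar>b + 2*n*a\<bar> < \<bar>a\<bar>" using reduce_step[OF a0] oa eb by blast
        have "nat (\<bar>a\<bar> + \<bar>b + 2*n*a\<bar>) < m" using n lt unfolding m[symmetric] by (subst nat_less_eq_zless) auto
        hence "mk a (b + 2*n*a) c (d + 2*n*c) \<in> gen"
          by (intro IH) (use det eb ec a4 in \<open>auto simp: algebra_simps\<close>)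
        moreover have "mk a b c d = mk a (b + 2*n*a) c (d + 2*n*c) ** mk 1 (2*(-n)) 0 1"
          by (simp add: algebra_simps)
        ultimately show ?thesis using gen_mult Apow_gen by metis
      qed
    qed
  qed
qed

lemma in_gen: "a*d - b*c = 1 \<Longrightarrow> a mod 4 = 1 \<Longrightarrow> even b \<Longrightarrow> even c \<Longrightarrow> mk a b c d \<in> gen"
  using descent by blast


definition val :: "bool \<times> mat2 \<Rightarrow> mat2" where
  "val l = (if fst l then snd l else inv\<^bsub>SL2Z\<^esub> (snd l))"

lemma word_eval_Nil: "word_eval [] = mat 1" by (simp add: word_eval_def)
lemma word_eval_Cons: "word_eval (l # ws) = val l ** word_eval ws"
  by (cases l) (simp add: word_eval_def val_def)

lemma reduced_Cons2: "reduced_word (l # l2 # ws) \<Longrightarrow> reduced_word (l2 # ws) \<and> \<not> (snd l = snd l2 \<and> fst l \<noteq> fst l2)"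
proof -
  assume r: "reduced_word (l # l2 # ws)"
  have "\<not> (snd l = snd l2 \<and> fst l \<noteq> fst l2)" using r[unfolded reduced_word_def, rule_format, of 0] by simp
  moreover have "reduced_word (l2 # ws)" unfolding reduced_word_def
  proof (intro allI impI)
    fix i assume "Suc i < length (l2 # ws)"
    thus "\<not> (snd ((l2 # ws) ! i) = snd ((l2 # ws) ! Suc i) \<and> fst ((l2 # ws) ! i) \<noteq> fst ((l2 # ws) ! Suc i))"
      using r[unfolded reduced_word_def, rule_format, of "Suc i"] by simp
  qed
  ultimately show ?thesis by simp
qed

lemma pingpong:
  fixes Wp :: "mat2 set" and X D :: "mat2 \<Rightarrow> (int^2) set" and pz :: "int^2"
  defines "W \<equiv> Wp \<union> (\<lambda>w. inv\<^bsub>SL2Z\<^esub> w) ` Wp"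
  assumes car: "Wp \<subseteq> carrier SL2Z"
    and disj: "\<forall>x\<in>Wp. inv\<^bsub>SL2Z\<^esub> x \<notin> Wp"
    and maps: "\<forall>g\<in>W. \<forall>x\<in>D g. g *v x \<in> X g"
    and sub: "\<forall>g\<in>W. \<forall>h\<in>W. h \<noteq> inv\<^bsub>SL2Z\<^esub> g \<longrightarrow> X h \<subseteq> D g"
    and pzD: "\<forall>g\<in>W. pz \<in> D g"
    and pzX: "\<forall>g\<in>W. pz \<notin> X g"
  shows "free_basis Wp"
proof -
  have valW: "snd l \<in> Wp \<Longrightarrow> val l \<in> W" for l unfolding val_def W_def by auto
  have key: "ws \<noteq> [] \<longrightarrow> snd ` set ws \<subseteq> Wp \<longrightarrow> reduced_word ws \<longrightarrow> word_eval ws *v pz \<in> X (val (hd ws))" for ws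
  proof (induction ws)
    case Nil
    then show ?case by simp
  next
    case (Cons l ws)
    show ?case
    proof (intro impI)
      assume s: "snd ` set (l # ws) \<subseteq> Wp" and r: "reduced_word (l # ws)"
      have lW: "val l \<in> W" using valW s by simp
      show "word_eval (l # ws) *v pz \<in> X (val (hd (l # ws)))"
      proof (cases ws)
        case Nil
        then show ?thesis using maps pzD lW by (simp add: word_eval_Cons word_eval_Nil)
      next
        case (Cons l2 ws')
        have r2: "reduced_word ws" and nr: "\<not> (snd l = snd l2 \<and> fst l \<noteq> fst l2)"
          using reduced_Cons2[of l l2 ws'] r Cons by auto
        have IH: "word_eval ws *v pz \<in> X (val l2)" using Cons.IH s r2 Cons by simp
        have l2W: "val l2 \<in> W" using valW s Cons by simp
        have xl: "snd l \<in> Wp" "snd l2 \<in> Wp" using s Cons by auto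
        have ne: "val l2 \<noteq> inv\<^bsub>SL2Z\<^esub> (val l)"
        proof
          assume eq: "val l2 = inv\<^bsub>SL2Z\<^esub> (val l)"
          have c1: "snd l \<in> carrier SL2Z" "snd l2 \<in> carrier SL2Z" using xl car by auto
          show False
          proof (cases "fst l"; cases "fst l2")
            assume "fst l" "fst l2"
            thus False using eq disj xl by (simp add: val_def)
          next
            assume "fst l" "\<not> fst l2"
            hence "inv\<^bsub>SL2Z\<^esub> (inv\<^bsub>SL2Z\<^esub> (snd l2)) = inv\<^bsub>SL2Z\<^esub> (inv\<^bsub>SL2Z\<^esub> (snd l))" using eq by (simp add: val_def)
            hence "snd l2 = snd l" using c1 by (simp add: SL.inv_inv)
            thus False using nr \<open>fst l\<close> \<open>\<not> fst l2\<close> by simp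
          next
            assume "\<not> fst l" "fst l2"
            hence "snd l2 = snd l" using eq c1 by (simp add: val_def SL.inv_inv)
            thus False using nr \<open>\<not> fst l\<close> \<open>fst l2\<close> by simp
          next
            assume "\<not> fst l" "\<not> fst l2"
            hence "inv\<^bsub>SL2Z\<^esub> (snd l2) = snd l" using eq c1 by (simp add: val_def SL.inv_inv)
            thus False using disj xl by metis
          qed
        qed
        have "word_eval ws *v pz \<in> D (val l)" using sub lW l2W ne IH by blast
        hence "val l *v (word_eval ws *v pz) \<in> X (val l)" using maps lW by blast
        thus ?thesis by (simp add: word_eval_Cons matrix_vector_mul_assoc)
      qed
    qed
  qed
  show ?thesis unfolding free_basis_def
  proof (intro conjI car allI impI notI)
    fix ws assume h: "ws \<noteq> [] \<and> snd ` set ws \<subseteq> Wp \<and> reduced_word ws" and e: "word_eval ws = \<one>\<^bsub>SL2Z\<^esub>"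
    have "pz \<in> X (val (hd ws))" using key[of ws] h e by simp
    moreover have "val (hd ws) \<in> W" using h valW by (cases ws) auto
    ultimately show False using pzX by blast
  qed
qed



lemma sep_core:
  fixes x y b d b' d' :: int
  defines "S \<equiv> x^2 + y^2" and "a \<equiv> b^2 + d^2" and "a' \<equiv> b'^2 + d'^2"
    and "l \<equiv> b*x + d*y" and "e \<equiv> d*x - b*y" and "l' \<equiv> b'*x + d'*y" and "e' \<equiv> d'*x - b'*y"
  assumes h1: "4*a'*\<bar>e'\<bar> < \<bar>l'\<bar>" and h2: "4*a*\<bar>e\<bar> \<le> \<bar>l\<bar>"
    and dt: "b*d' - d*b' \<noteq> 0" and r1: "a \<le> 8*a'" and r2: "a' \<le> 8*a"
  shows False
proof -
  have id1: "S * (b*d' - d*b') = l*e' - l'*e" unfolding S_def l_def e_def l'_def e'_def by algebra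
  have lag1: "l^2 + e^2 = S*a" unfolding S_def a_def l_def e_def by algebra
  have lag2: "l'^2 + e'^2 = S*a'" unfolding S_def a'_def l'_def e'_def by algebra
  have S0: "S \<ge> 0" unfolding S_def by simp
  have a0: "a > 0" using dt unfolding a_def by (smt (verit) mult_eq_0_iff power2_eq_square sum_power2_gt_zero_iff)
  have a0': "a' > 0" using dt unfolding a'_def by (smt (verit) mult_eq_0_iff power2_eq_square sum_power2_gt_zero_iff)
  have "S \<le> \<bar>S * (b*d' - d*b')\<bar>"
  proof -
    have "\<bar>b*d' - d*b'\<bar> \<ge> 1" using dt by simp
    hence "S * 1 \<le> S * \<bar>b*d' - d*b'\<bar>" using S0 by (rule mult_left_mono) 
    thus ?thesis using S0 by (simp add: abs_mult)
  qed
  also have "\<dots> \<le> \<bar>l\<bar>*\<bar>e'\<bar> + \<bar>l'\<bar>*\<bar>e\<bar>" unfolding id1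
    by (metis abs_mult abs_triangle_ineq4)
  finally have A: "S \<le> \<bar>l\<bar>*\<bar>e'\<bar> + \<bar>l'\<bar>*\<bar>e\<bar>" .
  have "4*a*a'*S \<le> 4*a*a'*(\<bar>l\<bar>*\<bar>e'\<bar> + \<bar>l'\<bar>*\<bar>e\<bar>)" using A a0 a0' by simp
  also have "\<dots> = (a*\<bar>l\<bar>)*(4*a'*\<bar>e'\<bar>) + (a'*\<bar>l'\<bar>)*(4*a*\<bar>e\<bar>)" by (simp add: algebra_simps)
  also have "\<dots> \<le> (a*\<bar>l\<bar>)*\<bar>l'\<bar> + (a'*\<bar>l'\<bar>)*\<bar>l\<bar>"
    apply (rule add_mono)
    using h1 h2 a0 a0' by (auto intro!: mult_left_mono)
  finally have C: "4*a*a'*S \<le> (a+a')*(\<bar>l\<bar>*\<bar>l'\<bar>)" by (simp add: algebra_simps)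
  have C0: "0 \<le> 4*a*a'*S" using a0 a0' S0 by simp
  have "(4*a*a'*S)^2 \<le> ((a+a')*(\<bar>l\<bar>*\<bar>l'\<bar>))^2" using C C0 by (rule power_mono)
  also have "\<dots> = (a+a')^2 * (l^2 * l'^2)" by (simp add: power_mult_distrib)
  also have "\<dots> \<le> (a+a')^2 * ((S*a)*(S*a'))"
  proof -
    have "l^2 \<le> S*a" "l'^2 \<le> S*a'" using lag1 lag2 by (smt (verit) zero_le_power2)+
    hence "l^2 * l'^2 \<le> (S*a)*(S*a')" using S0 a0 a0' by (intro mult_mono) auto
    thus ?thesis by (intro mult_left_mono) auto
  qed
  finally have E: "(16*a*a') * (a*a'*S^2) \<le> (a+a')^2 * (a*a'*S^2)" by (simp add: algebra_simps power2_eq_square)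
  have "S \<noteq> 0"
  proof
    assume "S = 0" hence "x = 0" "y = 0" unfolding S_def by (simp_all add: sum_power2_eq_zero_iff)
    thus False using h1 a0' unfolding l'_def e'_def by simp
  qed
  hence "a*a'*S^2 > 0" using a0 a0' S0 by simp
  hence F: "16*a*a' \<le> (a+a')^2" using E by (rule mult_right_le_imp_le[rotated])
  show False
  proof (cases "a \<le> a'")
    case True
    have "a*a \<le> a*a'" using True a0 by simp
    moreover have "a'*a' \<le> (8*a)*a'" using r2 a0' by (intro mult_right_mono) auto
    ultimately have "(a+a')^2 \<le> 11*(a*a')" by (simp add: power2_eq_square algebra_simps)
    moreover have "16*(a*a') \<le> (a+a')^2" using F by (simp add: mult.assoc)
    moreover have "a*a' > 0" using a0 a0' by simp
    ultimately show False by linarith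
  next
    case False
    have "a'*a' \<le> a*a'" using False a0' by simp
    moreover have "a*a \<le> (8*a')*a" using r1 a0 by (intro mult_right_mono) auto
    ultimately have "(a+a')^2 \<le> 11*(a*a')" by (simp add: power2_eq_square algebra_simps)
    moreover have "16*(a*a') \<le> (a+a')^2" using F by (simp add: mult.assoc)
    moreover have "a*a' > 0" using a0 a0' by simp
    ultimately show False by linarith
  qed
qed



definition P :: "int \<Rightarrow> int \<Rightarrow> int \<Rightarrow> mat2" where
  "P b d t = mk (1 + t*b*d) (-(t*b^2)) (t*d^2) (1 - t*b*d)"

lemma det_P: "(1 + t*b*d)*(1 - t*b*d) - (-(t*b^2))*(t*d^2) = (1::int)"
  by (simp add: algebra_simps power2_eq_square)

lemma P_carrier: "P b d t \<in> carrier SL2Z"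
  using det_P[of t b d] by (simp add: P_def)

lemma inv_P: "inv\<^bsub>SL2Z\<^esub> (P b d t) = P b d (-t)"
  unfolding P_def by (subst inv_mk[OF det_P]) (simp add: algebra_simps)

lemma sigma_P: "sigma (P b d t) = P d (-b) t"
  unfolding sigma_def inv_P by (simp add: P_def algebra_simps)

lemma tau_P: "tau (P b d t) = P d b (-t)"
  unfolding tau_def by (simp add: P_def mJ_mk algebra_simps)

lemma P_neg: "P (-b) (-d) t = P b d t" by (simp add: P_def)

lemma P_gen: "P b d 8 \<in> gen"
  unfolding P_def
proof (rule in_gen)
  show "(1 + 8*b*d) * (1 - 8*b*d) - - (8*b^2) * (8*d^2) = 1" by (rule det_P)
  have "1 + 8*b*d = 1 + (2*b*d)*4" by simp
  thus "(1 + 8*b*d) mod 4 = 1" by (simp only: mod_mult_self1) simp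
qed auto

lemma vc_eta: "(z::int^2) = vc (z$1) (z$2)" by (simp add: vec_eq_iff forall_2)

definition XX :: "int \<Rightarrow> int \<Rightarrow> int \<Rightarrow> (int^2) set" where
  "XX b d t = {z. t^2*(b^2+d^2)*(d*z$1 - b*z$2)^2 < 2*t*(b*z$1 + d*z$2)*(d*z$1 - b*z$2)}"
definition DD :: "int \<Rightarrow> int \<Rightarrow> int \<Rightarrow> (int^2) set" where
  "DD b d t = {z. -(t^2*(b^2+d^2)*(d*z$1 - b*z$2)^2) < 2*t*(b*z$1 + d*z$2)*(d*z$1 - b*z$2)}"

lemma P_maps: assumes "z \<in> DD b d t" shows "P b d t *v z \<in> XX b d t"
proof -
  obtain x y where z: "z = vc x y" by (rule that[OF vc_eta])
  define e where "e = d*x - b*y"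
  define l where "l = b*x + d*y"
  have h: "-(t^2*(b^2+d^2)*e^2) < 2*t*l*e" using assms by (simp add: DD_def z e_def l_def)
  have img: "P b d t *v z = vc (x + t*e*b) (y + t*e*d)" by (simp add: z P_def e_def algebra_simps power2_eq_square)
  have e': "d*(x + t*e*b) - b*(y + t*e*d) = e" unfolding e_def by algebra
  have l': "b*(x + t*e*b) + d*(y + t*e*d) = l + t*e*(b^2+d^2)" by (simp add: l_def algebra_simps power2_eq_square)
  have "t^2*(b^2+d^2)*e^2 < 2*t*(l + t*e*(b^2+d^2))*e"
    using h by (simp add: algebra_simps power2_eq_square)
  thus ?thesis unfolding img XX_def using e' l' by simp
qed

lemma XX_DD: "XX b d t \<subseteq> DD b d t"
proof
  fix z assume "z \<in> XX b d t"
  hence h: "t^2*(b^2+d^2)*(d*z$1 - b*z$2)^2 < 2*t*(b*z$1 + d*z$2)*(d*z$1 - b*z$2)" by (simp add: XX_def)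
  have "0 \<le> t^2*(b^2+d^2)*(d*z$1 - b*z$2)^2" by simp
  thus "z \<in> DD b d t" unfolding DD_def mem_Collect_eq using h by linarith
qed

lemma bound8: fixes t l e :: int shows "\<bar>t\<bar> = 8 \<Longrightarrow> 2*t*l*e \<le> 16*\<bar>l\<bar>*\<bar>e\<bar>"
proof -
  assume "\<bar>t\<bar> = 8"
  have "2*t*l*e \<le> \<bar>2*t*l*e\<bar>" by simp
  also have "\<dots> = 16*\<bar>l\<bar>*\<bar>e\<bar>" using \<open>\<bar>t\<bar> = 8\<close> by (simp add: abs_mult)
  finally show ?thesis .
qed

lemma XX_bound:
  assumes "\<bar>t\<bar> = 8" "z \<in> XX b d t"
  shows "4*(b^2+d^2)*\<bar>d*z$1 - b*z$2\<bar> < \<bar>b*z$1 + d*z$2\<bar>"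
proof -
  define e where "e = d*z$1 - b*z$2"
  define l where "l = b*z$1 + d*z$2"
  define a where "a = b^2+d^2"
  have t2: "t^2 = 64"
  proof -
    have "t^2 = \<bar>t\<bar>^2" by simp
    thus ?thesis using assms(1) by simp
  qed
  have "64*a*e^2 < 2*t*l*e" using assms(2) t2 by (simp add: XX_def e_def l_def a_def)
  also have "\<dots> \<le> 16*\<bar>l\<bar>*\<bar>e\<bar>" by (rule bound8[OF assms(1)])
  finally have "16*\<bar>e\<bar>*(4*a*\<bar>e\<bar>) < 16*\<bar>e\<bar>*\<bar>l\<bar>" by (simp add: power2_eq_square algebra_simps abs_mult_self_eq)
  hence "4*a*\<bar>e\<bar> < \<bar>l\<bar>" by (rule mult_left_less_imp_less) simp
  thus ?thesis by (simp add: e_def l_def a_def)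
qed

lemma notDD_bound:
  assumes "\<bar>t\<bar> = 8" "z \<notin> DD b d t"
  shows "4*(b^2+d^2)*\<bar>d*z$1 - b*z$2\<bar> \<le> \<bar>b*z$1 + d*z$2\<bar>"
proof -
  define e where "e = d*z$1 - b*z$2"
  define l where "l = b*z$1 + d*z$2"
  define a where "a = b^2+d^2"
  have t2: "t^2 = 64"
  proof -
    have "t^2 = \<bar>t\<bar>^2" by simp
    thus ?thesis using assms(1) by simp
  qed
  have "2*(-t)*l*e \<le> 16*\<bar>l\<bar>*\<bar>e\<bar>" by (rule bound8) (use assms(1) in simp)
  moreover have "64*a*e^2 \<le> 2*(-t)*l*e" using assms(2) t2 by (simp add: DD_def e_def l_def a_def)
  moreover have "64*a*e^2 = (16*\<bar>e\<bar>)*(4*a*\<bar>e\<bar>)" "16*\<bar>l\<bar>*\<bar>e\<bar> = (16*\<bar>e\<bar>)*\<bar>l\<bar>"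
    by (simp_all add: power2_eq_square mult_ac)
  ultimately have "(16*\<bar>e\<bar>)*(4*a*\<bar>e\<bar>) \<le> (16*\<bar>e\<bar>)*\<bar>l\<bar>" by linarith
  hence "e = 0 \<or> 4*a*\<bar>e\<bar> \<le> \<bar>l\<bar>"
  proof (cases "e = 0")
    case False
    hence "16*\<bar>e\<bar> > 0" by simp
    with \<open>(16*\<bar>e\<bar>)*(4*a*\<bar>e\<bar>) \<le> (16*\<bar>e\<bar>)*\<bar>l\<bar>\<close> show ?thesis
      using mult_left_le_imp_le by blast
  qed simp
  thus ?thesis by (auto simp: e_def l_def a_def)
qed



definition VV :: "nat \<Rightarrow> (int \<times> int) set" where
  "VV N = {(b,d). coprime b d \<and> b \<noteq> 0 \<and> d \<noteq> 0 \<and> \<bar>b\<bar> \<le> int N \<and> \<bar>d\<bar> \<le> int N \<and> int N < 2 * max \<bar>b\<bar> \<bar>d\<bar>}"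

definition Wp :: "nat \<Rightarrow> mat2 set" where
  "Wp N = (\<lambda>(b,d). P b d 8) ` VV N"

definition WW :: "nat \<Rightarrow> mat2 set" where
  "WW N = (\<lambda>((b,d),t). P b d t) ` (VV N \<times> {8,-8})"

lemma VV_rot: "(b,d) \<in> VV N \<Longrightarrow> (d,-b) \<in> VV N" "(b,d) \<in> VV N \<Longrightarrow> (d,b) \<in> VV N"
   "(b,d) \<in> VV N \<Longrightarrow> (-d,b) \<in> VV N"
  by (auto simp: VV_def coprime_commute max.commute)

lemma WW_eq: "WW N = Wp N \<union> (\<lambda>w. inv\<^bsub>SL2Z\<^esub> w) ` Wp N"
proof -
  have 1: "WW N = (\<lambda>(b,d). P b d 8) ` VV N \<union> (\<lambda>(b,d). P b d (-8)) ` VV N"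
  proof
    show "WW N \<subseteq> (\<lambda>(b,d). P b d 8) ` VV N \<union> (\<lambda>(b,d). P b d (-8)) ` VV N"
      unfolding WW_def by auto
    show "(\<lambda>(b,d). P b d 8) ` VV N \<union> (\<lambda>(b,d). P b d (-8)) ` VV N \<subseteq> WW N"
    proof
      fix z assume "z \<in> (\<lambda>(b,d). P b d 8) ` VV N \<union> (\<lambda>(b,d). P b d (-8)) ` VV N"
      then obtain b d t where "(b,d) \<in> VV N" "t = 8 \<or> t = -8" "z = P b d t" by auto
      thus "z \<in> WW N" unfolding WW_def by (intro image_eqI[where x="((b,d),t)"]) auto
    qed
  qed
  have 2: "(\<lambda>w. inv\<^bsub>SL2Z\<^esub> w) \<circ> (\<lambda>(b,d). P b d 8) = (\<lambda>(b,d). P b d (-8))"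
    by (auto simp: fun_eq_iff inv_P)
  show ?thesis unfolding 1 Wp_def image_comp 2 ..
qed

lemma colinear:
  assumes "(b,d) \<in> VV N" "(b',d') \<in> VV N" "b*d' - d*b' = 0"
  shows "P b' d' t = P b d t"
proof -
  have cp: "coprime b d" "coprime b' d'" and nz: "b \<noteq> 0" "b' \<noteq> 0" using assms by (auto simp: VV_def)
  have eq: "b*d' = d*b'" using assms(3) by simp
  have "b dvd d*b'" using eq by (metis dvd_triv_left)
  hence d1: "b dvd b'" using cp(1) by (simp add: coprime_dvd_mult_right_iff)
  have "b' dvd b*d'" using eq by (metis dvd_triv_right)
  hence d2: "b' dvd b" using cp(2) by (simp add: coprime_dvd_mult_left_iff)
  have "\<bar>b\<bar> = \<bar>b'\<bar>" using zdvd_antisym_abs[OF d1 d2] .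
  hence "b' = b \<or> b' = -b" by auto
  thus ?thesis
  proof
    assume "b' = b" thus ?thesis using eq nz by simp
  next
    assume "b' = -b"
    hence "b*d' = b*(-d)" using eq by simp
    hence "d' = -d" using mult_left_cancel[OF nz(1)] by blast
    thus ?thesis using \<open>b' = -b\<close> by (simp add: P_neg)
  qed
qed

lemma ratio:
  assumes "(b,d) \<in> VV N" "(b',d') \<in> VV N"
  shows "b^2 + d^2 \<le> 8*(b'^2 + d'^2)"
proof -
  have "\<bar>b\<bar> \<le> int N" "\<bar>d\<bar> \<le> int N" using assms(1) by (auto simp: VV_def)
  hence "b^2 \<le> (int N)^2" "d^2 \<le> (int N)^2"
    using abs_le_square_iff[of b "int N"] abs_le_square_iff[of d "int N"] by auto
  hence A: "b^2 + d^2 \<le> 2*(int N)^2" by simp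
  define m where "m = max \<bar>b'\<bar> \<bar>d'\<bar>"
  have "int N + 1 \<le> 2*m" using assms(2) by (simp add: VV_def m_def)
  hence "(int N + 1)^2 \<le> (2*m)^2" by (intro power_mono) auto
  hence B: "(int N)^2 < 4*m^2" by (simp add: power2_eq_square algebra_simps)
  have "m^2 \<le> b'^2 + d'^2" unfolding m_def by (cases "\<bar>b'\<bar> \<le> \<bar>d'\<bar>") (auto simp: max_def)
  have "2*(int N)^2 < 8*m^2" using B by linarith
  also have "\<dots> \<le> 8*(b'^2 + d'^2)" using \<open>m^2 \<le> b'^2 + d'^2\<close> by simp
  finally show ?thesis using A by linarith
qed

definition Par :: "nat \<Rightarrow> mat2 \<Rightarrow> int \<times> int \<times> int" where
  "Par N g = (SOME (b,d,t). (b,d) \<in> VV N \<and> (t = 8 \<or> t = -8) \<and> g = P b d t)"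

lemma Par:
  assumes "g \<in> WW N"
  obtains b d t where "Par N g = (b,d,t)" "(b,d) \<in> VV N" "t = 8 \<or> t = -8" "g = P b d t"
proof -
  have "\<exists>p. (case p of (b,d,t) \<Rightarrow> (b,d) \<in> VV N \<and> (t = 8 \<or> t = -8) \<and> g = P b d t)"
    using assms unfolding WW_def by auto
  hence "case Par N g of (b,d,t) \<Rightarrow> (b,d) \<in> VV N \<and> (t = 8 \<or> t = -8) \<and> g = P b d t"
    unfolding Par_def by (rule someI_ex)
  thus ?thesis using that by (cases "Par N g") auto
qed

definition XG :: "nat \<Rightarrow> mat2 \<Rightarrow> (int^2) set" where
  "XG N g = (case Par N g of (b,d,t) \<Rightarrow> XX b d t)"
definition DG :: "nat \<Rightarrow> mat2 \<Rightarrow> (int^2) set" where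
  "DG N g = (case Par N g of (b,d,t) \<Rightarrow> DD b d t)"

lemma x0_ok:
  assumes "(b,d) \<in> VV N" "t = 8 \<or> t = -8"
  shows "vc 1 0 \<in> DD b d t" "vc 1 0 \<notin> XX b d t"
proof -
  have nz: "b \<noteq> 0" "d \<noteq> 0" using assms by (auto simp: VV_def)
  have t2: "t^2 = 64" using assms(2) by auto
  have at: "\<bar>t\<bar> = 8" using assms(2) by auto
  have key: "16*B*D < 64*(B^2+D^2)*D^2" if "B \<ge> 0" "D \<ge> 1" for B D :: int
    by (smt (verit) mult_less_le_imp_less self_le_power that(1,2) zero_le_power2 zero_less_numeral)
  have k: "16*\<bar>b\<bar>*\<bar>d\<bar> < 64*(b^2+d^2)*d^2" using key[of "\<bar>b\<bar>" "\<bar>d\<bar>"] nz by simp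
  have b1: "2*t*b*d \<le> 16*\<bar>b\<bar>*\<bar>d\<bar>" by (rule bound8[OF at])
  have b2: "2*(-t)*b*d \<le> 16*\<bar>b\<bar>*\<bar>d\<bar>" by (rule bound8) (use at in simp)
  hence b2': "-(2*t*b*d) \<le> 16*\<bar>b\<bar>*\<bar>d\<bar>" by simp
  have "-(t^2*(b^2+d^2)*d^2) < 2*t*b*d" using k b2' unfolding t2 by linarith
  thus "vc 1 0 \<in> DD b d t" by (simp only: DD_def mem_Collect_eq vc_nth mult_1_right mult_zero_right diff_zero add_0_right)
  have "\<not> (t^2*(b^2+d^2)*d^2 < 2*t*b*d)" using k b1 unfolding t2 by linarith
  thus "vc 1 0 \<notin> XX b d t" by (simp only: XX_def mem_Collect_eq vc_nth mult_1_right mult_zero_right diff_zero add_0_right not_False_eq_True)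
qed



lemma free_Wp: "free_basis (Wp N)"
proof (rule pingpong[where X="XG N" and D="DG N" and pz="vc 1 0"], unfold WW_eq[symmetric])
  show "Wp N \<subseteq> carrier SL2Z" unfolding Wp_def using P_carrier by auto
  show "\<forall>x\<in>Wp N. inv\<^bsub>SL2Z\<^esub> x \<notin> Wp N"
  proof (intro ballI notI)
    fix x assume "x \<in> Wp N" "inv\<^bsub>SL2Z\<^esub> x \<in> Wp N"
    then obtain b d b' d' where v: "(b,d) \<in> VV N" "(b',d') \<in> VV N" and "x = P b d 8" "P b d (-8) = P b' d' 8"
      unfolding Wp_def by (auto simp: inv_P)
    hence "8*b^2 = -(8*b'^2)" by (simp add: P_def)
    moreover have "b \<noteq> 0" using v by (simp add: VV_def)
    moreover have "0 \<le> b'^2" by simp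
    ultimately show False by (smt (verit) zero_less_power2)
  qed
  show "\<forall>g\<in>WW N. \<forall>x\<in>DG N g. g *v x \<in> XG N g"
  proof (intro ballI)
    fix g z assume g: "g \<in> WW N" and z: "z \<in> DG N g"
    obtain b d t where "Par N g = (b,d,t)" "g = P b d t" using Par[OF g] by metis
    thus "g *v z \<in> XG N g" using z P_maps by (simp add: XG_def DG_def)
  qed
  show "\<forall>g\<in>WW N. vc 1 0 \<in> DG N g"
  proof
    fix g assume g: "g \<in> WW N"
    obtain b d t where "Par N g = (b,d,t)" "(b,d) \<in> VV N" "t = 8 \<or> t = -8" using Par[OF g] by metis
    thus "vc 1 0 \<in> DG N g" using x0_ok by (simp add: DG_def)
  qed
  show "\<forall>g\<in>WW N. vc 1 0 \<notin> XG N g"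
  proof
    fix g assume g: "g \<in> WW N"
    obtain b d t where "Par N g = (b,d,t)" "(b,d) \<in> VV N" "t = 8 \<or> t = -8" using Par[OF g] by metis
    thus "vc 1 0 \<notin> XG N g" using x0_ok by (simp add: XG_def)
  qed
  show "\<forall>g\<in>WW N. \<forall>h\<in>WW N. h \<noteq> inv\<^bsub>SL2Z\<^esub> g \<longrightarrow> XG N h \<subseteq> DG N g"
  proof (intro ballI impI subsetI)
    fix g h z assume g: "g \<in> WW N" and h: "h \<in> WW N" and ne: "h \<noteq> inv\<^bsub>SL2Z\<^esub> g" and z: "z \<in> XG N h"
    obtain b d t where pg: "Par N g = (b,d,t)" "(b,d) \<in> VV N" "t = 8 \<or> t = -8" "g = P b d t" using Par[OF g] by metis
    obtain b' d' t' where ph: "Par N h = (b',d',t')" "(b',d') \<in> VV N" "t' = 8 \<or> t' = -8" "h = P b' d' t'" using Par[OF h] by metis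
    have zX: "z \<in> XX b' d' t'" using z ph(1) by (simp add: XG_def)
    show "z \<in> DG N g"
    proof (cases "b*d' - d*b' = 0")
      case True
      hence hh: "h = P b d t'" using colinear[OF pg(2) ph(2)] ph(4) by simp
      have "t' \<noteq> -t" using ne hh pg(4) by (auto simp: inv_P)
      hence "t' = t" using pg(3) ph(3) by auto
      hence "h = g" using hh pg(4) by simp
      hence "z \<in> XX b d t" using z pg(1) by (simp add: XG_def)
      thus ?thesis using XX_DD pg(1) by (auto simp: DG_def)
    next
      case False
      show ?thesis
      proof (rule ccontr)
        assume "z \<notin> DG N g"
        hence zD: "z \<notin> DD b d t" using pg(1) by (simp add: DG_def)
        have at: "\<bar>t\<bar> = 8" "\<bar>t'\<bar> = 8" using pg(3) ph(3) by auto
        show False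
          using sep_core[OF XX_bound[OF at(2) zX] notDD_bound[OF at(1) zD] False ratio[OF pg(2) ph(2)] ratio[OF ph(2) pg(2)]] .
      qed
    qed
  qed
qed



lemma finite_VV: "finite (VV N)"
proof -
  have "VV N \<subseteq> {-int N..int N} \<times> {-int N..int N}" by (auto simp: VV_def)
  thus ?thesis by (rule finite_subset) auto
qed

lemma finite_WW: "finite (WW N)" unfolding WW_def using finite_VV by auto

lemma sigma_WW: "sigma ` WW N = WW N"
proof
  show "sigma ` WW N \<subseteq> WW N"
  proof
    fix y assume "y \<in> sigma ` WW N"
    then obtain b d t where "(b,d) \<in> VV N" "t = 8 \<or> t = -8" "y = sigma (P b d t)" unfolding WW_def by auto
    thus "y \<in> WW N" unfolding WW_def sigma_P using VV_rot(1) by (intro image_eqI[where x="((d,-b),t)"]) auto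
  qed
  show "WW N \<subseteq> sigma ` WW N"
  proof
    fix y assume "y \<in> WW N"
    then obtain b d t where v: "(b,d) \<in> VV N" "t = 8 \<or> t = -8" "y = P b d t" unfolding WW_def by auto
    have "P (-d) b t \<in> WW N" unfolding WW_def using VV_rot(3)[OF v(1)] v(2) by (intro image_eqI[where x="((-d,b),t)"]) auto
    moreover have "y = sigma (P (-d) b t)" using v by (simp add: sigma_P)
    ultimately show "y \<in> sigma ` WW N" by blast
  qed
qed

lemma tau_WW: "tau ` WW N = WW N"
proof
  show "tau ` WW N \<subseteq> WW N"
  proof
    fix y assume "y \<in> tau ` WW N"
    then obtain b d t where "(b,d) \<in> VV N" "t = 8 \<or> t = -8" "y = tau (P b d t)" unfolding WW_def by auto
    thus "y \<in> WW N" unfolding WW_def tau_P using VV_rot(2) by (intro image_eqI[where x="((d,b),-t)"]) auto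
  qed
  show "WW N \<subseteq> tau ` WW N"
  proof
    fix y assume "y \<in> WW N"
    then obtain b d t where v: "(b,d) \<in> VV N" "t = 8 \<or> t = -8" "y = P b d t" unfolding WW_def by auto
    have "P d b (-t) \<in> WW N" unfolding WW_def using VV_rot(2)[OF v(1)] v(2) by (intro image_eqI[where x="((d,b),-t)"]) auto
    moreover have "y = tau (P d b (-t))" using v by (simp add: tau_P)
    ultimately show "y \<in> tau ` WW N" by blast
  qed
qed

lemma entry_bound:
  assumes "g \<in> WW N" "N \<ge> 1"
  shows "\<bar>g$i$j\<bar> \<le> 9 * (int N)^2"
proof -
  obtain b d t where v: "(b,d) \<in> VV N" "t = 8 \<or> t = -8" "g = P b d t" using assms(1) unfolding WW_def by auto
  have bb: "\<bar>b\<bar> \<le> int N" "\<bar>d\<bar> \<le> int N" using v(1) by (auto simp: VV_def)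
  have at: "\<bar>t\<bar> = 8" using v(2) by auto
  have N1: "1 \<le> (int N)^2" using assms(2) by simp
  have sq: "b^2 \<le> (int N)^2" "d^2 \<le> (int N)^2"
    using abs_le_square_iff[of b "int N"] abs_le_square_iff[of d "int N"] bb by auto
  have bd: "\<bar>b*d\<bar> \<le> (int N)^2" using bb by (simp add: abs_mult power2_eq_square mult_mono)
  have e1: "\<bar>1 + t*b*d\<bar> \<le> 9 * (int N)^2"
  proof -
    have "\<bar>1 + t*b*d\<bar> \<le> 1 + \<bar>t\<bar>*\<bar>b*d\<bar>" by (metis abs_mult abs_one abs_triangle_ineq mult.assoc)
    thus ?thesis using at bd N1 by simp
  qed
  have e2: "\<bar>1 - t*b*d\<bar> \<le> 9 * (int N)^2"
  proof -
    have "\<bar>1 - t*b*d\<bar> \<le> 1 + \<bar>t\<bar>*\<bar>b*d\<bar>" by (metis abs_mult abs_one abs_triangle_ineq4 mult.assoc)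
    thus ?thesis using at bd N1 by simp
  qed
  have e3: "\<bar>-(t*b^2)\<bar> \<le> 9 * (int N)^2" "\<bar>t*d^2\<bar> \<le> 9 * (int N)^2"
    using at sq N1 by (simp_all add: abs_mult)
  have "i = 1 \<or> i = 2" "j = 1 \<or> j = 2" by (rule exhaust_2)+
  thus ?thesis using e1 e2 e3 unfolding v(3) P_def by auto
qed

lemma supnorm_le: "(\<And>i j. \<bar>M$i$j\<bar> \<le> K) \<Longrightarrow> supnorm M \<le> K"
proof -
  assume h: "\<And>i j. \<bar>M$i$j\<bar> \<le> K"
  have eq: "{\<bar>M $ i $ j\<bar> | i j. True} = (\<lambda>(i,j). \<bar>M$i$j\<bar>) ` UNIV" by auto
  show ?thesis unfolding supnorm_def eq
    by (subst Max_le_iff) (auto simp: h)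
qed



lemma sum_inv_sq: "n \<ge> 1 \<Longrightarrow> (\<Sum>k\<in>{2..n}. 1/(real k)^2) \<le> 2/3 - 2/(2*real n+1)"
proof (induction n rule: nat_induct_at_least)
  case base
  then show ?case by simp
next
  case (Suc n)
  have eq: "{2..Suc n} = insert (Suc n) {2..n}" using Suc.hyps by (simp add: atLeastAtMostSuc_conv)
  have e1: "2/(2*real n+1) - 2/(2*(real n + 1)+1) = 4/((2*real n+1)*(2*real n+3))"
    by (simp add: field_simps)
  have e2: "1/(real n+1)^2 = 4/(4*(real n+1)^2)" by simp
  have "4/(4*(real n+1)^2) \<le> 4/((2*real n+1)*(2*real n+3))"
  proof -
    have pos: "0 < (2*real n+1)*(2*real n+3)" by (intro mult_pos_pos) auto
    show ?thesis by (rule frac_le[OF _ _ pos]) (auto simp: power2_eq_square algebra_simps)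
  qed
  hence step: "1/(real n+1)^2 \<le> 2/(2*real n+1) - 2/(2*(real n + 1)+1)" unfolding e1 e2 .
  have A: "(\<Sum>k\<in>{2..Suc n}. 1/(real k)^2) = 1/(real n + 1)^2 + (\<Sum>k\<in>{2..n}. 1/(real k)^2)"
    unfolding eq by (simp add: add.commute)
  have B: "2/(2*real (Suc n)+1) = 2/(2*(real n + 1)+1)" by simp
  show ?case using A B Suc.IH step by linarith
qed

lemma card_mult: "k \<ge> 1 \<Longrightarrow> card {x\<in>{1..N::nat}. k dvd x} = N div k"
proof -
  assume k: "k \<ge> 1"
  have "{x\<in>{1..N}. k dvd x} = (\<lambda>j. k*j) ` {1..N div k}"
  proof
    show "{x\<in>{1..N}. k dvd x} \<subseteq> (\<lambda>j. k*j) ` {1..N div k}"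
    proof
      fix x assume x: "x \<in> {x\<in>{1..N}. k dvd x}"
      then obtain j where j: "x = k*j" by auto
      have "j \<ge> 1" using x j by (cases j) auto
      moreover have "j \<le> N div k" using x j k by (simp add: less_eq_div_iff_mult_less_eq mult.commute)
      ultimately show "x \<in> (\<lambda>j. k*j) ` {1..N div k}" using j by auto
    qed
    show "(\<lambda>j. k*j) ` {1..N div k} \<subseteq> {x\<in>{1..N}. k dvd x}"
    proof
      fix x assume "x \<in> (\<lambda>j. k*j) ` {1..N div k}"
      then obtain j where jj: "j \<in> {1..N div k}" "x = k*j" by (rule imageE)
      hence j: "x = k*j" "1 \<le> j" "j \<le> N div k" by simp_all
      have "j*k \<le> N" using j(3) k by (simp add: less_eq_div_iff_mult_less_eq)
      thus "x \<in> {x\<in>{1..N}. k dvd x}" using j k by (auto simp: mult.commute)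
    qed
  qed
  moreover have "inj_on (\<lambda>j. k*j) {1..N div k}" using k by (auto simp: inj_on_def)
  ultimately show ?thesis by (simp add: card_image)
qed

definition Box :: "nat \<Rightarrow> (nat \<times> nat) set" where "Box N = {1..N} \<times> {1..N}"
definition Cop :: "nat \<Rightarrow> (nat \<times> nat) set" where "Cop N = {p\<in>Box N. coprime (fst p) (snd p)}"

lemma noncop: "card (Box N - Cop N) \<le> (\<Sum>k\<in>{2..N}. (N div k)^2)"
proof -
  define M where "M k = {x\<in>{1..N}. k dvd x}" for k
  have "Box N - Cop N \<subseteq> (\<Union>k\<in>{2..N}. M k \<times> M k)"
  proof
    fix p assume p: "p \<in> Box N - Cop N"
    obtain b d where pbd: "p = (b,d)" by (cases p)
    have b: "1 \<le> b" "b \<le> N" "1 \<le> d" "d \<le> N" "\<not> coprime b d" using p pbd by (auto simp: Box_def Cop_def)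
    define g where "g = gcd b d"
    have "g \<noteq> 1" using b(5) unfolding g_def by (simp add: coprime_iff_gcd_eq_1)
    moreover have "g > 0" using b unfolding g_def by simp
    ultimately have "g \<ge> 2" by simp
    moreover have "g \<le> N"
    proof -
      have "gcd b d \<le> b" by (rule gcd_le1_nat) (use b in simp)
      thus ?thesis using b(2) unfolding g_def by linarith
    qed
    moreover have "g dvd b" "g dvd d" unfolding g_def by simp_all
    ultimately show "p \<in> (\<Union>k\<in>{2..N}. M k \<times> M k)" using b pbd unfolding M_def by auto
  qed
  hence "card (Box N - Cop N) \<le> card (\<Union>k\<in>{2..N}. M k \<times> M k)"
    by (rule card_mono[rotated]) (auto simp: M_def)
  also have "\<dots> \<le> (\<Sum>k\<in>{2..N}. card (M k \<times> M k))" by (rule card_UN_le) simp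
  also have "\<dots> = (\<Sum>k\<in>{2..N}. (N div k)^2)"
  proof (rule sum.cong)
    fix k assume "k \<in> {2..N}"
    hence "card (M k) = N div k" unfolding M_def by (intro card_mult) auto
    thus "card (M k \<times> M k) = (N div k)^2" by (simp add: card_cartesian_product power2_eq_square)
  qed simp
  finally show ?thesis .
qed

lemma card_Cop: "N \<ge> 1 \<Longrightarrow> real (card (Cop N)) \<ge> (real N)^2 / 3"
proof -
  assume N: "N \<ge> 1"
  have fin: "finite (Box N)" by (simp add: Box_def)
  have sub: "Cop N \<subseteq> Box N" by (auto simp: Cop_def)
  have cb: "card (Box N) = N*N" by (simp add: Box_def)
  have "card (Box N - Cop N) = card (Box N) - card (Cop N)"
    using sub fin by (simp add: card_Diff_subset finite_subset)
  moreover have "card (Cop N) \<le> card (Box N)" using sub fin by (rule card_mono[rotated])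
  ultimately have "real (card (Cop N)) = real (N*N) - real (card (Box N - Cop N))" using cb by simp
  moreover have "real (card (Box N - Cop N)) \<le> (real N)^2 * (2/3)"
  proof -
    have "real (card (Box N - Cop N)) \<le> (\<Sum>k\<in>{2..N}. real ((N div k)^2))"
      using noncop[of N] by (simp only: of_nat_sum[symmetric] of_nat_le_iff)
    also have "\<dots> \<le> (\<Sum>k\<in>{2..N}. (real N)^2 * (1/(real k)^2))"
    proof (rule sum_mono)
      fix k assume k: "k \<in> {2..N}"
      have "real (N div k) \<le> real N / real k" by (rule of_nat_div_le_of_nat)
      hence "(real (N div k))^2 \<le> (real N / real k)^2" by (intro power_mono) auto
      thus "real ((N div k)^2) \<le> (real N)^2 * (1/(real k)^2)" by (simp add: power_divide)
    qed
    also have "\<dots> = (real N)^2 * (\<Sum>k\<in>{2..N}. 1/(real k)^2)" by (simp add: sum_distrib_left)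
    also have "\<dots> \<le> (real N)^2 * (2/3)"
    proof (rule mult_left_mono)
      show "(\<Sum>k\<in>{2..N}. 1/(real k)^2) \<le> 2/3" using sum_inv_sq[OF N] by (smt (verit) divide_nonneg_nonneg of_nat_0_le_iff)
    qed simp
    finally show ?thesis .
  qed
  ultimately show ?thesis by (simp add: power2_eq_square)
qed

definition Vn :: "nat \<Rightarrow> (nat \<times> nat) set" where
  "Vn N = Cop N - {1..N div 2} \<times> {1..N div 2}"

lemma card_Vn: "N \<ge> 1 \<Longrightarrow> real (card (Vn N)) \<ge> (real N)^2 / 12"
proof -
  assume N: "N \<ge> 1"
  have "card (Cop N) - card ({1..N div 2} \<times> {1..N div 2}) \<le> card (Vn N)"
    unfolding Vn_def by (rule diff_card_le_card_Diff) simp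
  moreover have "real a - real b \<le> real (a - b)" for a b :: nat by (cases "b \<le> a") (auto simp: of_nat_diff)
  moreover have "card ({1..N div 2} \<times> {1..N div 2}) = (N div 2) * (N div 2)" by simp
  ultimately have "real (card (Cop N)) - real ((N div 2) * (N div 2)) \<le> real (card (Vn N))"
  proof -
    assume a1: "card (Cop N) - card ({1..N div 2} \<times> {1..N div 2}) \<le> card (Vn N)"
      and a2: "\<And>a b. real a - real b \<le> real (a - b)"
      and a3: "card ({1..N div 2} \<times> {1..N div 2}) = (N div 2) * (N div 2)"
    have "real (card (Cop N) - (N div 2) * (N div 2)) \<le> real (card (Vn N))" using a1 a3 by simp
    thus ?thesis using a2[of "card (Cop N)" "(N div 2) * (N div 2)"] by linarith
  qed
  moreover have "real ((N div 2) * (N div 2)) \<le> (real N)^2 / 4"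
  proof -
    have "real (N div 2) \<le> real N / 2" using of_nat_div_le_of_nat[of N 2] by simp
    hence "(real (N div 2))^2 \<le> (real N / 2)^2" by (intro power_mono) auto
    thus ?thesis by (simp add: power2_eq_square)
  qed
  ultimately show ?thesis using card_Cop[OF N] by simp
qed

lemma Vn_to_VV: "(b,d) \<in> Vn N \<Longrightarrow> (int b, int d) \<in> VV N"
proof -
  assume h: "(b,d) \<in> Vn N"
  hence b: "1 \<le> b" "b \<le> N" "1 \<le> d" "d \<le> N" "coprime b d" "\<not> (b \<le> N div 2 \<and> d \<le> N div 2)"
    by (auto simp: Vn_def Cop_def Box_def)
  have "N < 2 * max b d" using b(6) by auto
  hence "int N < 2 * max \<bar>int b\<bar> \<bar>int d\<bar>" by (cases "b \<le> d") (auto simp: max_def)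
  thus ?thesis using b by (simp add: VV_def coprime_int_iff)
qed

lemma card_WW: "N \<ge> 1 \<Longrightarrow> real (card (WW N)) \<ge> (real N)^2 / 12"
proof -
  assume N: "N \<ge> 1"
  define f where "f p = P (int (fst p)) (int (snd p)) 8" for p
  have sub: "f ` Vn N \<subseteq> WW N"
  proof
    fix y assume "y \<in> f ` Vn N"
    then obtain b d where "(b,d) \<in> Vn N" "y = f (b,d)" by auto
    thus "y \<in> WW N" unfolding WW_def f_def using Vn_to_VV by (intro image_eqI[where x="((int b, int d),8)"]) auto
  qed
  have inj: "inj_on f (Vn N)"
  proof (rule inj_onI)
    fix p q assume "p \<in> Vn N" "q \<in> Vn N" "f p = f q"
    hence "int (fst p)^2 = int (fst q)^2" "int (snd p)^2 = int (snd q)^2" by (simp_all add: f_def P_def)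
    hence "int (fst p) = int (fst q)" "int (snd p) = int (snd q)"
      using power2_eq_iff_nonneg[of "int (fst p)" "int (fst q)"] power2_eq_iff_nonneg[of "int (snd p)" "int (snd q)"] by auto
    thus "p = q" by (simp add: prod_eq_iff)
  qed
  have "card (Vn N) = card (f ` Vn N)" using inj by (simp add: card_image)
  also have "\<dots> \<le> card (WW N)" using sub finite_WW by (rule card_mono[rotated])
  finally have "real (card (Vn N)) \<le> real (card (WW N))" by simp
  thus ?thesis using card_Vn[OF N] by linarith
qed



lemma gen_subgroup: "subgroup gen SL2Z"
  by (rule SL.generate_is_subgroup) (auto simp: mA_mk mB_mk)

theorem lemma2p17:
  "\<exists>C::real. C > 0 \<and>
    (\<forall>R::real. R \<ge> 1 \<longrightarrow>
      (\<exists>F Wp W.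
         free_basis Wp \<and>
         F = generate SL2Z Wp \<and>
         subgroup F SL2Z \<and>
         F \<subseteq> generate SL2Z {mA, mB} \<and>
         W = Wp \<union> (\<lambda>w. inv\<^bsub>SL2Z\<^esub> w) ` Wp \<and>
         finite W \<and>
         sigma ` W = W \<and> tau ` W = W \<and>
         (\<forall>w\<in>W. real_of_int (supnorm w) \<le> 18 * R\<^sup>2) \<and>
         real (card W) \<ge> C * R\<^sup>2 \<and>
         (\<forall>p::nat. prime p \<and> real p > 36 * R\<^sup>2 \<longrightarrow>
            (\<forall>w\<in>W. \<forall>w'\<in>W. w \<noteq> w' \<longrightarrow>
               (\<exists>i j. (w $ i $ j) mod int p \<noteq> (w' $ i $ j) mod int p)))))"
proof (intro exI[of _ "1/48"] conjI allI impI)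
  show "(0::real) < 1/48" by simp
  fix R :: real assume R: "R \<ge> 1"
  define N where "N = nat \<lfloor>R\<rfloor>"
  have N1: "N \<ge> 1" using R unfolding N_def by linarith
  have NR: "real N \<le> R" using R unfolding N_def by linarith
  have RN: "R \<le> 2 * real N" using R N1 unfolding N_def by linarith
  have NR2: "(real N)^2 \<le> R^2" using NR by (intro power_mono) auto
  have RN2: "R^2 \<le> 4 * (real N)^2"
  proof -
    have "R^2 \<le> (2 * real N)^2" using RN R by (intro power_mono) auto
    thus ?thesis by (simp add: power_mult_distrib)
  qed
  have car: "Wp N \<subseteq> carrier SL2Z" unfolding Wp_def using P_carrier by auto
  have ent: "\<And>w i j. w \<in> WW N \<Longrightarrow> real_of_int \<bar>w$i$j\<bar> \<le> 9 * R^2"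
  proof -
    fix w i j assume "w \<in> WW N"
    hence "\<bar>w$i$j\<bar> \<le> 9 * (int N)^2" using entry_bound N1 by blast
    hence "real_of_int \<bar>w$i$j\<bar> \<le> real_of_int (9 * (int N)^2)" by (simp only: of_int_le_iff)
    hence "real_of_int \<bar>w$i$j\<bar> \<le> 9 * (real N)^2" by simp
    thus "real_of_int \<bar>w$i$j\<bar> \<le> 9 * R^2" using NR2 by linarith
  qed
  show "\<exists>F Wp W.
         free_basis Wp \<and>
         F = generate SL2Z Wp \<and>
         subgroup F SL2Z \<and>
         F \<subseteq> generate SL2Z {mA, mB} \<and>
         W = Wp \<union> (\<lambda>w. inv\<^bsub>SL2Z\<^esub> w) ` Wp \<and>
         finite W \<and>
         sigma ` W = W \<and> tau ` W = W \<and>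
         (\<forall>w\<in>W. real_of_int (supnorm w) \<le> 18 * R\<^sup>2) \<and>
         real (card W) \<ge> 1/48 * R\<^sup>2 \<and>
         (\<forall>p::nat. prime p \<and> real p > 36 * R\<^sup>2 \<longrightarrow>
            (\<forall>w\<in>W. \<forall>w'\<in>W. w \<noteq> w' \<longrightarrow>
               (\<exists>i j. (w $ i $ j) mod int p \<noteq> (w' $ i $ j) mod int p)))"
  proof (rule exI[of _ "generate SL2Z (Wp N)"], rule exI[of _ "Wp N"], rule exI[of _ "WW N"], intro conjI)
    show "free_basis (Wp N)" by (rule free_Wp)
    show "generate SL2Z (Wp N) = generate SL2Z (Wp N)" ..
    show "subgroup (generate SL2Z (Wp N)) SL2Z" using car by (rule SL.generate_is_subgroup)
    show "generate SL2Z (Wp N) \<subseteq> gen"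
      by (rule SL.generate_subgroup_incl[OF _ gen_subgroup]) (auto simp: Wp_def P_gen)
    show "WW N = Wp N \<union> (\<lambda>w. inv\<^bsub>SL2Z\<^esub> w) ` Wp N" by (rule WW_eq)
    show "finite (WW N)" by (rule finite_WW)
    show "sigma ` WW N = WW N" by (rule sigma_WW)
    show "tau ` WW N = WW N" by (rule tau_WW)
    show "\<forall>w\<in>WW N. real_of_int (supnorm w) \<le> 18 * R\<^sup>2"
    proof
      fix w assume w: "w \<in> WW N"
      have "supnorm w \<le> 9 * (int N)^2" by (rule supnorm_le) (rule entry_bound[OF w N1])
      hence "real_of_int (supnorm w) \<le> real_of_int (9 * (int N)^2)" by (simp only: of_int_le_iff)
      hence "real_of_int (supnorm w) \<le> 9 * (real N)^2" by simp
      thus "real_of_int (supnorm w) \<le> 18 * R\<^sup>2" using NR2 by (smt (verit) zero_le_power2)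
    qed
    show "real (card (WW N)) \<ge> 1/48 * R\<^sup>2" using card_WW[OF N1] RN2 by linarith
    show "\<forall>p::nat. prime p \<and> real p > 36 * R\<^sup>2 \<longrightarrow>
            (\<forall>w\<in>WW N. \<forall>w'\<in>WW N. w \<noteq> w' \<longrightarrow>
               (\<exists>i j. (w $ i $ j) mod int p \<noteq> (w' $ i $ j) mod int p))"
    proof (intro allI impI ballI)
      fix p :: nat and w w' assume p: "prime p \<and> real p > 36 * R\<^sup>2" and w: "w \<in> WW N" and w': "w' \<in> WW N"
        and ne: "w \<noteq> w'"
      obtain i j where ij: "w$i$j \<noteq> w'$i$j" using ne by (metis vec_eq_iff)
      have "real_of_int \<bar>w$i$j - w'$i$j\<bar> \<le> real_of_int \<bar>w$i$j\<bar> + real_of_int \<bar>w'$i$j\<bar>" by simp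
      also have "\<dots> \<le> 18 * R^2" using ent[OF w, of i j] ent[OF w', of i j] by linarith
      also have "\<dots> < real p" using p R by (smt (verit) zero_le_power2)
      finally have lt: "\<bar>w$i$j - w'$i$j\<bar> < int p" by linarith
      show "\<exists>i j. (w $ i $ j) mod int p \<noteq> (w' $ i $ j) mod int p"
      proof (rule exI[of _ i], rule exI[of _ j], rule notI)
        assume "(w $ i $ j) mod int p = (w' $ i $ j) mod int p"
        hence "int p dvd (w$i$j - w'$i$j)" by (simp add: mod_eq_dvd_iff)
        moreover have "w$i$j - w'$i$j \<noteq> 0" using ij by simp
        ultimately have "\<bar>int p\<bar> \<le> \<bar>w$i$j - w'$i$j\<bar>" by (intro dvd_imp_le_int)
        thus False using lt by simp
      qed
    qed
  qed
qed


end
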